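(* If $\Phi$ is a set of modal formulas such that $\mathbf{K}+\Phi=\mathrm{Log}_{>1}(\mathbb{R})$, then infinitely many distinct propositional variables occur in the formulas of $\Phi$. Consequently, $\mathrm{Log}_{>1}(\mathbb{R})$ is not finitely axiomatizable.
   Context: Modal formulas are built from a countable set of propositional variables using $\bot$, $\to$ and one unary modality $\lozenge$. $\mathrm{Log}_{>1}(\mathbb{R})$ is the set of formulas valid (true at every point under every valuation) in the frame $(\mathbb{R},R_{>1})$, where $xR_{>1}y$ iff $|x-y|>1$ and $x\models\lozenge\varphi$ iff some $y$ with $xR_{>1}y$ satisfies $\varphi$. A normal modal logic is a set of formulas containing all classical tautologies, $\neg\lozenge\bot$ and $\lozenge(p\vee q)\to\lozenge p\vee\lozenge q$, closed under modus ponens, uniform substitution, and the rule: from $\varphi\to\psi$ infer $\lozenge\varphi\to\lozenge\psi$. $\mathbf{K}+\Phi$ is the smallest normal modal logic containing $\Phi$. A logic is finitely axiomatizable if it equals $\mathbf{K}+\Phi$ for some finite $\Phi$. *)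

theory Defs
  imports Complex_Main
begin

datatype fm = Var nat | Bot | Imp fm fm | Dia fm

definition Neg :: "fm \<Rightarrow> fm" where "Neg p = Imp p Bot"
definition Or :: "fm \<Rightarrow> fm \<Rightarrow> fm" where "Or p q = Imp (Neg p) q"

fun vars :: "fm \<Rightarrow> nat set" where
  "vars (Var n) = {n}"
| "vars Bot = {}"
| "vars (Imp p q) = vars p \<union> vars q"
| "vars (Dia p) = vars p"

fun subst :: "(nat \<Rightarrow> fm) \<Rightarrow> fm \<Rightarrow> fm" where
  "subst s (Var n) = s n"
| "subst s Bot = Bot"
| "subst s (Imp p q) = Imp (subst s p) (subst s q)"
| "subst s (Dia p) = Dia (subst s p)"

text \<open>Classical tautologies: formulas true under every Boolean valuation,
  where variables and diamond-formulas are treated as propositional atoms.\<close>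
fun tval :: "(fm \<Rightarrow> bool) \<Rightarrow> fm \<Rightarrow> bool" where
  "tval v (Var n) = v (Var n)"
| "tval v Bot = False"
| "tval v (Imp p q) = (tval v p \<longrightarrow> tval v q)"
| "tval v (Dia p) = v (Dia p)"

definition tautology :: "fm \<Rightarrow> bool" where
  "tautology f \<longleftrightarrow> (\<forall>v. tval v f)"

inductive_set KPlus :: "fm set \<Rightarrow> fm set" for Phi :: "fm set" where
  taut: "tautology f \<Longrightarrow> f \<in> KPlus Phi"
| ax_bot: "Neg (Dia Bot) \<in> KPlus Phi"
| ax_or: "Imp (Dia (Or (Var 0) (Var 1))) (Or (Dia (Var 0)) (Dia (Var 1))) \<in> KPlus Phi"
| ax_Phi: "f \<in> Phi \<Longrightarrow> f \<in> KPlus Phi"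
| mp: "Imp f g \<in> KPlus Phi \<Longrightarrow> f \<in> KPlus Phi \<Longrightarrow> g \<in> KPlus Phi"
| us: "f \<in> KPlus Phi \<Longrightarrow> subst s f \<in> KPlus Phi"
| mono: "Imp f g \<in> KPlus Phi \<Longrightarrow> Imp (Dia f) (Dia g) \<in> KPlus Phi"

fun sat :: "(nat \<Rightarrow> real set) \<Rightarrow> real \<Rightarrow> fm \<Rightarrow> bool" where
  "sat V x (Var n) = (x \<in> V n)"
| "sat V x Bot = False"
| "sat V x (Imp p q) = (sat V x p \<longrightarrow> sat V x q)"
| "sat V x (Dia p) = (\<exists>y. \<bar>x - y\<bar> > 1 \<and> sat V y p)"

definition LogR :: "fm set" where
  "LogR = {f. \<forall>V x. sat V x f}"

definition finitely_axiomatizable :: "fm set \<Rightarrow> bool" where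
  "finitely_axiomatizable L \<longleftrightarrow> (\<exists>Phi. finite Phi \<and> L = KPlus Phi)"

end

theory Submission
  imports Defs
begin

fun satK :: "('w \<Rightarrow> 'w \<Rightarrow> bool) \<Rightarrow> (nat \<Rightarrow> 'w set) \<Rightarrow> 'w \<Rightarrow> fm \<Rightarrow> bool" where
  "satK Rl V w (Var n) = (w \<in> V n)"
| "satK Rl V w Bot = False"
| "satK Rl V w (Imp p q) = (satK Rl V w p \<longrightarrow> satK Rl V w q)"
| "satK Rl V w (Dia p) = (\<exists>y. Rl w y \<and> satK Rl V y p)"

lemma tval_satK: "tval (\<lambda>g. satK Rl V w g) f = satK Rl V w f"
  by (induction f) auto

lemma subst_satK: "satK Rl V w (subst s f) = satK Rl (\<lambda>n. {w. satK Rl V w (s n)}) w f"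
  by (induction f arbitrary: w) auto

lemma sat_eq: "sat V x f = satK (\<lambda>x y. \<bar>x - y\<bar> > 1) V x f"
  by (induction f arbitrary: x) auto

lemma finite_vars: "finite (vars f)"
  by (induction f) auto

definition Dm :: "nat \<Rightarrow> nat \<Rightarrow> nat \<Rightarrow> bool" where "Dm m x y = (x \<noteq> y \<and> y < m)"

lemma sound:
  assumes "f \<in> KPlus Phi" "\<forall>g\<in>Phi. \<forall>V w. w < m \<longrightarrow> satK (Dm m) V w g"
  shows "\<forall>V w. w < m \<longrightarrow> satK (Dm m) V w f"
  using assms(1)
proof induction
  case (taut f)
  then show ?case unfolding tautology_def by (metis tval_satK)
next
  case ax_bot
  show ?case by (simp add: Neg_def)
next
  case ax_or
  show ?case by (auto simp add: Neg_def Or_def)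
next
  case (ax_Phi f)
  then show ?case using assms(2) by blast
next
  case (mp f g)
  then show ?case by auto
next
  case (us f s)
  then show ?case by (simp add: subst_satK)
next
  case (mono f g)
  then show ?case by (fastforce simp: Dm_def)
qed

lemma transfer:
  fixes N :: "nat set" and m :: nat and V :: "nat \<Rightarrow> nat set"
  assumes fin: "finite N" and mbig: "2 ^ card N < m" and phi: "\<phi> \<in> LogR"
    and vs: "vars \<phi> \<subseteq> N" and wm: "w < m"
  shows "satK (Dm m) V w \<phi>"
proof -
  define c where "c w = {k\<in>N. w \<in> V k}" for w
  have "\<not> inj_on c {..<m}"
  proof
    assume inj: "inj_on c {..<m}"
    have "c ` {..<m} \<subseteq> Pow N" by (auto simp: c_def)
    hence "card (c ` {..<m}) \<le> card (Pow N)" by (simp add: card_mono fin)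
    also have "\<dots> = 2 ^ card N" using fin by (simp add: card_Pow)
    finally show False using card_image[OF inj] mbig by simp
  qed
  then obtain u v where u: "u < m" "v < m" "u \<noteq> v" "c u = c v" unfolding inj_on_def by auto
  define h where "h x = (if 0 \<le> x \<and> nat \<lfloor>x/3\<rfloor> < m \<and> nat \<lfloor>x/3\<rfloor> \<noteq> u
      \<and> x \<le> 3 * real (nat \<lfloor>x/3\<rfloor>) + 1 then nat \<lfloor>x/3\<rfloor> else u)" for x :: real
  have hm: "h x < m" for x using u(1) by (simp add: h_def)
  have hP2: "h x = k \<longleftrightarrow> 3 * real k \<le> x \<and> x \<le> 3 * real k + 1" if k: "k < m" "k \<noteq> u" for x k
  proof
    assume a: "h x = k"
    then have c1: "0 \<le> x" and c2: "nat \<lfloor>x/3\<rfloor> = k" and c3: "x \<le> 3 * real (nat \<lfloor>x/3\<rfloor>) + 1"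
      using k by (auto simp: h_def split: if_splits)
    have "\<lfloor>x/3\<rfloor> \<ge> 0" using c1 by simp
    then have f: "\<lfloor>x/3\<rfloor> = int k" using c2 by auto
    have "real_of_int \<lfloor>x/3\<rfloor> \<le> x/3" by (rule of_int_floor_le)
    then have "real k \<le> x/3" using f by simp
    then show "3 * real k \<le> x \<and> x \<le> 3 * real k + 1" using c3 c2 by simp
  next
    assume a: "3 * real k \<le> x \<and> x \<le> 3 * real k + 1"
    have "\<lfloor>x/3\<rfloor> = int k" unfolding floor_eq_iff using a by simp
    then have "nat \<lfloor>x/3\<rfloor> = k" by simp
    then show "h x = k" using a k unfolding h_def by auto
  qed
  have hneg: "h x = u" if "x < 0" for x using that by (simp add: h_def)
  define U where "U k = {x. h x \<in> V k}" for k
  have claim: "vars \<psi> \<subseteq> N \<Longrightarrow> w < m \<Longrightarrow> c w = c (h x) \<Longrightarrow> (sat U x \<psi> \<longleftrightarrow> satK (Dm m) V w \<psi>)"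
    for \<psi> w x
  proof (induction \<psi> arbitrary: w x)
    case (Var k)
    then have kN: "k \<in> N" by simp
    have "k \<in> c w \<longleftrightarrow> k \<in> c (h x)" using Var.prems by simp
    then show ?case by (simp add: c_def U_def kN)
  next
    case Bot
    show ?case by simp
  next
    case (Imp p q)
    then show ?case by simp
  next
    case (Dia p)
    have vp: "vars p \<subseteq> N" using Dia.prems by simp
    show ?case
    proof
      assume "sat U x (Dia p)"
      then obtain y where xy: "\<bar>x - y\<bar> > 1" and py: "sat U y p" by auto
      show "satK (Dm m) V w (Dia p)"
      proof (cases "h y = w")
        case False
        have "satK (Dm m) V (h y) p" using Dia.IH[of "h y" y] vp hm py by blast
        then show ?thesis using False hm[of y] by (auto simp: Dm_def)
      next
        case True
        show ?thesis
        proof (cases "\<exists>w'. w' < m \<and> w' \<noteq> w \<and> c w' = c w")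
          case True
          then obtain w' where w': "w' < m" "w' \<noteq> w" "c w' = c w" by blast
          have "satK (Dm m) V w' p" using Dia.IH[of w' y] vp w' py \<open>h y = w\<close> by auto
          then show ?thesis using w' by (auto simp: Dm_def)
        next
          case False
          have wu: "w \<noteq> u" using False u by auto
          have hx: "h x = w"
          proof (rule ccontr)
            assume "h x \<noteq> w"
            then show False using False hm[of x] Dia.prems(3) by metis
          qed
          have "3 * real w \<le> x \<and> x \<le> 3 * real w + 1" using hP2[OF Dia.prems(2) wu] hx by blast
          moreover have "3 * real w \<le> y \<and> y \<le> 3 * real w + 1"
            using hP2[OF Dia.prems(2) wu] \<open>h y = w\<close> by blast
          ultimately show ?thesis using xy by (auto simp: abs_if split: if_splits)
        qed
      qed
    next
      assume "satK (Dm m) V w (Dia p)"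
      then obtain w' where w': "w' \<noteq> w" "w' < m" "satK (Dm m) V w' p" by (fastforce simp: Dm_def)
      have "\<exists>y. \<bar>x - y\<bar> > 1 \<and> c (h y) = c w'"
      proof (cases "c w' = c u")
        case True
        let ?y = "- \<bar>x\<bar> - 2"
        have "h ?y = u" by (rule hneg) simp
        moreover have "\<bar>x - ?y\<bar> > 1" by (simp add: abs_if)
        ultimately show ?thesis using True by metis
      next
        case False
        hence w'u: "w' \<noteq> u" by auto
        have h1: "h (3 * real w') = w'" using hP2[OF w'(2) w'u] by simp
        have h1': "h (3 * real w' + 1) = w'" using hP2[OF w'(2) w'u] by simp
        show ?thesis
        proof (cases "\<exists>w''. w'' < m \<and> w'' \<noteq> w' \<and> c w'' = c w'")
          case True
          then obtain w'' where w'': "w'' < m" "w'' \<noteq> w'" "c w'' = c w'" by blast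
          have w''u: "w'' \<noteq> u" using False w''(3) by auto
          have h2: "h (3 * real w'') = w''" using hP2[OF w''(1) w''u] by simp
          have "\<bar>3 * real w' - 3 * real w''\<bar> \<ge> 3" using w''(2)
            by (cases "w' < w''") (auto simp: abs_if)
          then have "\<bar>x - 3 * real w'\<bar> > 1 \<or> \<bar>x - 3 * real w''\<bar> > 1" by (auto simp: abs_if split: if_splits)
          then show ?thesis using h1 h2 w''(3) by metis
        next
          case False
          have "\<not> (3 * real w' \<le> x \<and> x \<le> 3 * real w' + 1)"
          proof
            assume "3 * real w' \<le> x \<and> x \<le> 3 * real w' + 1"
            then have "h x = w'" using hP2[OF w'(2) w'u] by blast
            then show False using False Dia.prems(2,3) w'(1) by metis
          qed
          then have "\<bar>x - 3 * real w'\<bar> > 1 \<or> \<bar>x - (3 * real w' + 1)\<bar> > 1" by (auto simp: abs_if)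
          then show ?thesis using h1 h1' by metis
        qed
      qed
      then obtain y where y: "\<bar>x - y\<bar> > 1" "c (h y) = c w'" by blast
      then have "sat U y p" using Dia.IH[of w' y] vp w' by auto
      then show "sat U x (Dia p)" using y by auto
    qed
  qed
  obtain x where hx: "h x = w"
  proof (cases "w = u")
    case True
    then show ?thesis using hneg[of "-1"] that by simp
  next
    case False
    then show ?thesis using hP2[OF wm False, of "3 * real w"] that by simp
  qed
  have "sat U x \<phi>" using phi by (simp add: LogR_def)
  then show ?thesis using claim[OF vs wm] hx by simp
qed

fun bigOr :: "fm list \<Rightarrow> fm" where
  "bigOr [] = Bot"
| "bigOr (f # fs) = Or f (bigOr fs)"

fun bigAnd :: "fm list \<Rightarrow> fm" where
  "bigAnd [] = Imp Bot Bot"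
| "bigAnd (f # fs) = Neg (Imp f (Neg (bigAnd fs)))"

definition Box :: "fm \<Rightarrow> fm" where "Box f = Neg (Dia (Neg f))"

lemma satK_bigOr: "satK Rl V w (bigOr fs) \<longleftrightarrow> (\<exists>f\<in>set fs. satK Rl V w f)"
  by (induction fs) (auto simp: Or_def Neg_def)

lemma satK_bigAnd: "satK Rl V w (bigAnd fs) \<longleftrightarrow> (\<forall>f\<in>set fs. satK Rl V w f)"
  by (induction fs) (auto simp: Neg_def)

lemma satK_Box: "satK Rl V w (Box f) \<longleftrightarrow> (\<forall>y. Rl w y \<longrightarrow> satK Rl V y f)"
  by (auto simp: Box_def Neg_def)

definition cov :: "nat \<Rightarrow> fm" where
  "cov m = Neg (Box (Box (Neg (Imp (bigAnd (map (\<lambda>i. Imp (Var i) (Box (Neg (Var i)))) [0..<m]))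
      (Neg (bigOr (map Var [0..<m])))))))"

lemma satK_cov: "satK Rl V w (cov m) \<longleftrightarrow> \<not> (\<forall>z. Rl w z \<longrightarrow> (\<forall>y. Rl z y \<longrightarrow>
    (\<forall>i<m. y \<in> V i \<longrightarrow> (\<forall>t. Rl y t \<longrightarrow> t \<notin> V i)) \<and> (\<exists>i<m. y \<in> V i)))"
  by (simp add: cov_def satK_Box satK_bigAnd satK_bigOr Neg_def atLeast0LessThan) blast

lemma cov_valid: "cov m \<in> LogR"
proof -
  have "sat V x (cov m)" for V x
  proof -
    have "\<not> (\<forall>z. \<bar>x - z\<bar> > (1::real) \<longrightarrow> (\<forall>y. \<bar>z - y\<bar> > 1 \<longrightarrow>
      (\<forall>i<m. y \<in> V i \<longrightarrow> (\<forall>t. \<bar>y - t\<bar> > 1 \<longrightarrow> t \<notin> V i)) \<and> (\<exists>i<m. y \<in> V i)))"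
    proof
      assume H: "\<forall>z. \<bar>x - z\<bar> > (1::real) \<longrightarrow> (\<forall>y. \<bar>z - y\<bar> > 1 \<longrightarrow>
        (\<forall>i<m. y \<in> V i \<longrightarrow> (\<forall>t. \<bar>y - t\<bar> > 1 \<longrightarrow> t \<notin> V i)) \<and> (\<exists>i<m. y \<in> V i))"
      have G: "(\<forall>i<m. y \<in> V i \<longrightarrow> (\<forall>t. \<bar>y - t\<bar> > 1 \<longrightarrow> t \<notin> V i)) \<and> (\<exists>i<m. y \<in> V i)" for y
      proof -
        have "\<bar>x - (\<bar>x\<bar> + \<bar>y\<bar> + 2)\<bar> > 1" "\<bar>(\<bar>x\<bar> + \<bar>y\<bar> + 2) - y\<bar> > 1" by (auto simp: abs_if)
        then show ?thesis using H by blast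
      qed
      define f where "f k = (SOME i. i < m \<and> 2 * real k \<in> V i)" for k :: nat
      have fk: "f k < m \<and> 2 * real k \<in> V (f k)" for k
        unfolding f_def by (rule someI_ex) (use G in blast)
      have "\<not> inj_on f {..m}"
      proof
        assume inj: "inj_on f {..m}"
        have "f ` {..m} \<subseteq> {..<m}" using fk by auto
        then have "card (f ` {..m}) \<le> m" by (metis card_lessThan card_mono finite_lessThan)
        then show False using card_image[OF inj] by simp
      qed
      then obtain k l where kl: "k \<noteq> l" "f k = f l" unfolding inj_on_def by auto
      have "\<bar>2 * real k - 2 * real l\<bar> > 1" using kl(1)
        by (cases "k < l") (auto simp: abs_if)
      then show False using G[of "2 * real k"] fk[of k] fk[of l] kl(2) by metis
    qed
    then show ?thesis by (simp add: sat_eq satK_cov)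
  qed
  then show ?thesis by (simp add: LogR_def)
qed

lemma cov_fails: "m > 0 \<Longrightarrow> \<not> satK (Dm m) (\<lambda>i. {i}) 0 (cov m)"
  by (simp add: satK_cov Dm_def)

theorem proposition5p1:
  shows "(\<forall>Phi. KPlus Phi = LogR \<longrightarrow> infinite (\<Union>f\<in>Phi. vars f))
         \<and> \<not> finitely_axiomatizable LogR"
proof -
  have part1: "infinite (\<Union>f\<in>Phi. vars f)" if eq: "KPlus Phi = LogR" for Phi
  proof
    assume fin: "finite (\<Union>f\<in>Phi. vars f)"
    define N where "N = (\<Union>f\<in>Phi. vars f)"
    define m where "m = 2 ^ card N + (1::nat)"
    have "\<forall>g\<in>Phi. \<forall>V w. w < m \<longrightarrow> satK (Dm m) V w g"
    proof (intro ballI allI impI)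
      fix g V w assume g: "g \<in> Phi" and w: "w < m"
      have "g \<in> LogR" using g eq KPlus.ax_Phi by blast
      moreover have "vars g \<subseteq> N" using g by (auto simp: N_def)
      ultimately show "satK (Dm m) V w g" using transfer[of N m g w V] fin w by (simp add: N_def m_def)
    qed
    moreover have "cov m \<in> KPlus Phi" using eq cov_valid by simp
    ultimately have "satK (Dm m) (\<lambda>i. {i}) 0 (cov m)" using sound by (simp add: m_def)
    then show False using cov_fails[of m] by (simp add: m_def)
  qed
  moreover have "\<not> finitely_axiomatizable LogR"
  proof
    assume "finitely_axiomatizable LogR"
    then obtain Phi where "finite Phi" "LogR = KPlus Phi" by (auto simp: finitely_axiomatizable_def)
    then show False using part1[of Phi] finite_vars by auto
  qed
  ultimately show ?thesis by blast
qed

end
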